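(* Let $\alpha\colon\mathbb{R}\to\mathbb{R}$ be continuous and suppose $S_\alpha$ is a graphical strip over $K$. Then $\frac{\alpha(w_2)-\alpha(w_1)}{w_2-w_1}\ge-1$ for all $w_1<w_2$ if and only if there is a function $\sigma\colon\mathbb{R}\to\mathbb{R}$ such that $-2\le\frac{\sigma(z_2)-\sigma(z_1)}{z_2-z_1}<2$ for all $z_1<z_2$ and $$S_\alpha=\bigcup_{z\in\mathbb{R}}[(-1,-\sigma(z),z),(1,\sigma(z),z)].$$
   Context: $\mathbb{H}$ is $\mathbb{R}^3$ with product $(x,y,z)\cdot(x',y',z')=(x+x',y+y',z+z'+\frac{xy'-yx'}{2})$; $Y^t=(0,t,0)$. A horizontal line is a set $\{p\cdot tv:t\in\mathbb{R}\}$, $v=(a,b,0)\neq0$; a ruled surface is a union of horizontal segments (rulings) with endpoints in its boundary. $V_0=\{(x,0,z)\}$; for $D\subset V_0$, $f\colon D\to\mathbb{R}$, $\Gamma_f=\{u\cdot Y^{f(u)}\}$. A graphical strip over $D$ is an intrinsic graph of a continuous function on $D$ which is ruled and all of whose rulings meet the $z$-axis. $K=\{(x,0,z):|x|\le1\}$. For continuous $\alpha$: $\eta(w)=w+\frac{\alpha(w)}2$ and $S_\alpha=\bigcup_w[(-1,-\alpha(w),\eta(w)),(1,\alpha(w),\eta(w))]$, $[p_1,p_2]$ the line segment. *)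

theory Defs
  imports "HOL-Analysis.Analysis"
begin

type_synonym heis = "real \<times> real \<times> real"

definition hmul :: "heis \<Rightarrow> heis \<Rightarrow> heis" (infixl "\<cdot>\<^sub>H" 70) where
  "hmul p q = (case p of (x, y, z) \<Rightarrow> case q of (x', y', z') \<Rightarrow>
      (x + x', y + y', z + z' + (x * y' - y * x') / 2))"

definition Yflow :: "real \<Rightarrow> heis" where
  "Yflow t = (0, t, 0)"

definition horizontal_vec :: "heis \<Rightarrow> bool" where
  "horizontal_vec v \<longleftrightarrow> snd (snd v) = 0 \<and> v \<noteq> 0"

definition hseg :: "heis \<Rightarrow> heis \<Rightarrow> real \<Rightarrow> real \<Rightarrow> heis set" where
  "hseg p v s t = {p \<cdot>\<^sub>H (r *\<^sub>R v) | r. s \<le> r \<and> r \<le> t}"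

definition V0 :: "heis set" where
  "V0 = {(x, y, z). y = 0}"

definition intrinsic_graph :: "heis set \<Rightarrow> (heis \<Rightarrow> real) \<Rightarrow> heis set" where
  "intrinsic_graph D f = {u \<cdot>\<^sub>H Yflow (f u) | u. u \<in> D}"

definition ruled_by :: "heis set \<Rightarrow> heis set \<Rightarrow> (heis \<times> heis \<times> real \<times> real) set \<Rightarrow> bool" where
  "ruled_by S B R \<longleftrightarrow>
     (\<forall>(p, v, s, t) \<in> R. horizontal_vec v \<and> s < t \<and>
         p \<cdot>\<^sub>H (s *\<^sub>R v) \<in> B \<and> p \<cdot>\<^sub>H (t *\<^sub>R v) \<in> B) \<and>
     S = (\<Union>(p, v, s, t) \<in> R. hseg p v s t)"

definition z_axis :: "heis set" where
  "z_axis = {(0, 0, z) | z. True}"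

text \<open>Graphical strip over \<open>D \<subseteq> V0\<close>: intrinsic graph of a continuous \<open>f\<close> on \<open>D\<close>
  which is ruled (endpoints of rulings in the boundary of the graph, i.e. the graph
  over the relative frontier of \<open>D\<close> in \<open>V0\<close>), all rulings meeting the \<open>z\<close>-axis.\<close>
definition graphical_strip :: "heis set \<Rightarrow> heis set \<Rightarrow> bool" where
  "graphical_strip D S \<longleftrightarrow> D \<subseteq> V0 \<and>
     (\<exists>f. continuous_on D f \<and> S = intrinsic_graph D f \<and>
        (\<exists>R. ruled_by S (intrinsic_graph (D \<inter> (subtopology euclidean V0 frontier_of D)) f) R \<and>
             (\<forall>(p, v, s, t) \<in> R. hseg p v s t \<inter> z_axis \<noteq> {})))"

definition Kset :: "heis set" where
  "Kset = {(x, 0, z) | x z. \<bar>x\<bar> \<le> 1}"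

definition S_alpha :: "(real \<Rightarrow> real) \<Rightarrow> heis set" where
  "S_alpha \<alpha> = (\<Union>w. closed_segment (-1, - \<alpha> w, w + \<alpha> w / 2) (1, \<alpha> w, w + \<alpha> w / 2))"

end

theory Submission
  imports Defs
begin

lemma seg_mem:
  assumes "p \<in> closed_segment ((-1::real), - s, (z::real)) (1, s, z)"
  shows "snd (snd p) = z \<and> fst (snd p) = fst p * s"
proof -
  from assms obtain u where "p = (1 - u) *\<^sub>R ((-1::real), - s, z) + u *\<^sub>R (1, s, z)"
    unfolding closed_segment_def by blast
  then show ?thesis by (simp add: algebra_simps)
qed

lemma seg_mid:
  "((0::real), (0::real), (z::real)) \<in> closed_segment ((-1::real), - s, z) (1, s, z)"
  unfolding closed_segment_def
  by (rule CollectI, rule exI[of _ "1/2"]) (simp add: algebra_simps)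

lemma seg_end:
  "((1::real), (s::real), (z::real)) \<in> closed_segment ((-1::real), - s, z) (1, s, z)"
  by (rule ends_in_segment)

theorem lemma3p4:
  fixes \<alpha> :: "real \<Rightarrow> real"
  assumes "continuous_on UNIV \<alpha>"
    and "graphical_strip Kset (S_alpha \<alpha>)"
  shows "(\<forall>w1 w2. w1 < w2 \<longrightarrow> (\<alpha> w2 - \<alpha> w1) / (w2 - w1) \<ge> -1) \<longleftrightarrow>
    (\<exists>\<sigma> :: real \<Rightarrow> real.
       (\<forall>z1 z2. z1 < z2 \<longrightarrow> -2 \<le> (\<sigma> z2 - \<sigma> z1) / (z2 - z1) \<and> (\<sigma> z2 - \<sigma> z1) / (z2 - z1) < 2) \<and>
       S_alpha \<alpha> = (\<Union>z. closed_segment (-1, - \<sigma> z, z) (1, \<sigma> z, z)))"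
proof
  assume H: "\<forall>w1 w2. w1 < w2 \<longrightarrow> (\<alpha> w2 - \<alpha> w1) / (w2 - w1) \<ge> -1"
  define \<eta> where "\<eta> w = w + \<alpha> w / 2" for w
  have A: "\<alpha> w2 - \<alpha> w1 \<ge> -(w2 - w1)" if "w1 < w2" for w1 w2
  proof -
    have "(\<alpha> w2 - \<alpha> w1) / (w2 - w1) \<ge> -1" using H that by blast
    with that show ?thesis by (simp add: divide_simps split: if_splits)
  qed
  have E: "\<eta> w2 - \<eta> w1 \<ge> (w2 - w1) / 2" if "w1 \<le> w2" for w1 w2
  proof (cases "w1 = w2")
    case False
    then show ?thesis using A[of w1 w2] that unfolding \<eta>_def by simp
  qed simp
  have inj: "inj \<eta>"
  proof (rule injI)
    fix x y assume "\<eta> x = \<eta> y"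
    then show "x = y"
    proof (cases "x \<le> y")
      case True
      then have "(y - x) / 2 \<le> \<eta> y - \<eta> x" by (rule E)
      with \<open>\<eta> x = \<eta> y\<close> True show ?thesis by (simp add: field_simps)
    next
      case False
      then have "(x - y) / 2 \<le> \<eta> x - \<eta> y" by (intro E) simp
      with \<open>\<eta> x = \<eta> y\<close> False show ?thesis by (simp add: field_simps)
    qed
  qed
  have cont: "continuous_on UNIV \<eta>"
    unfolding \<eta>_def by (intro continuous_intros assms(1)) auto
  have surj: "surj \<eta>"
  proof -
    have "z \<in> range \<eta>" for z
    proof -
      define c where "c = 2 * \<bar>z - \<eta> 0\<bar>"
      have c0: "c \<ge> 0" unfolding c_def by simp
      have c1: "c \<ge> 2 * (z - \<eta> 0)" "c \<ge> 2 * (\<eta> 0 - z)" unfolding c_def by (auto simp: abs_if)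
      have e1: "(c - 0) / 2 \<le> \<eta> c - \<eta> 0" using E c0 by blast
      have e2: "(0 - (-c)) / 2 \<le> \<eta> 0 - \<eta> (-c)" using E[of "-c" 0] c0 by simp
      have "\<eta> c \<ge> z" using e1 c1 by (simp add: field_simps)
      moreover have "\<eta> (-c) \<le> z" using e2 c1 by (simp add: field_simps)
      ultimately obtain x where "\<eta> x = z"
        using IVT'[of \<eta> "-c" z c] c0 continuous_on_subset[OF cont] by auto
      then show ?thesis by blast
    qed
    then show ?thesis by blast
  qed
  define \<sigma> where "\<sigma> z = \<alpha> (inv \<eta> z)" for z
  have s\<eta>: "\<sigma> (\<eta> w) = \<alpha> w" for w unfolding \<sigma>_def using inv_f_f[OF inj] by simp
  show "\<exists>\<sigma> :: real \<Rightarrow> real.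
       (\<forall>z1 z2. z1 < z2 \<longrightarrow> -2 \<le> (\<sigma> z2 - \<sigma> z1) / (z2 - z1) \<and> (\<sigma> z2 - \<sigma> z1) / (z2 - z1) < 2) \<and>
       S_alpha \<alpha> = (\<Union>z. closed_segment (-1, - \<sigma> z, z) (1, \<sigma> z, z))"
  proof (intro exI[of _ \<sigma>] conjI allI impI)
    fix z1 z2 :: real assume lt: "z1 < z2"
    obtain w1 where w1: "\<eta> w1 = z1" using surj by (metis surjD)
    obtain w2 where w2: "\<eta> w2 = z2" using surj by (metis surjD)
    have "w1 < w2"
    proof (rule ccontr)
      assume "\<not> w1 < w2"
      then have "w2 \<le> w1" by simp
      then have "(w1 - w2) / 2 \<le> \<eta> w1 - \<eta> w2" by (rule E)
      then have "\<eta> w2 \<le> \<eta> w1" using \<open>w2 \<le> w1\<close> by (simp add: field_simps)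
      then show False using lt w1 w2 by simp
    qed
    then have a: "\<alpha> w2 - \<alpha> w1 \<ge> -(w2 - w1)" using A by blast
    have zd: "z2 - z1 = (w2 - w1) + (\<alpha> w2 - \<alpha> w1) / 2" unfolding w1[symmetric] w2[symmetric] \<eta>_def by (simp add: field_simps)
    have s: "\<sigma> z2 - \<sigma> z1 = \<alpha> w2 - \<alpha> w1" using s\<eta> w1 w2 by metis
    have p: "z2 - z1 > 0" using lt by simp
    show "-2 \<le> (\<sigma> z2 - \<sigma> z1) / (z2 - z1)"
      using p a \<open>w1 < w2\<close> unfolding s by (simp add: divide_simps zd)
    show "(\<sigma> z2 - \<sigma> z1) / (z2 - z1) < 2"
      using p a \<open>w1 < w2\<close> unfolding s by (simp add: divide_simps zd)
  next
    let ?F = "\<lambda>z. closed_segment ((-1::real), - \<sigma> z, z) (1, \<sigma> z, z)"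
    have "S_alpha \<alpha> = (\<Union>w. ?F (\<eta> w))"
      unfolding S_alpha_def s\<eta> by (simp add: \<eta>_def)
    also have "\<dots> = \<Union> (?F ` range \<eta>)" by (simp add: image_image)
    also have "\<dots> = (\<Union>z. ?F z)" using surj by simp
    finally show "S_alpha \<alpha> = (\<Union>z. ?F z)" .
  qed
next
  assume "\<exists>\<sigma> :: real \<Rightarrow> real.
       (\<forall>z1 z2. z1 < z2 \<longrightarrow> -2 \<le> (\<sigma> z2 - \<sigma> z1) / (z2 - z1) \<and> (\<sigma> z2 - \<sigma> z1) / (z2 - z1) < 2) \<and>
       S_alpha \<alpha> = (\<Union>z. closed_segment (-1, - \<sigma> z, z) (1, \<sigma> z, z))"
  then obtain \<sigma> :: "real \<Rightarrow> real" where
    sl: "\<And>z1 z2. z1 < z2 \<Longrightarrow> -2 \<le> (\<sigma> z2 - \<sigma> z1) / (z2 - z1) \<and> (\<sigma> z2 - \<sigma> z1) / (z2 - z1) < 2"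
    and SE: "S_alpha \<alpha> = (\<Union>z. closed_segment (-1, - \<sigma> z, z) (1, \<sigma> z, z))" by blast
  have key: "\<alpha> w = \<sigma> (w + \<alpha> w / 2)" for w
  proof -
    have "((1::real), \<alpha> w, w + \<alpha> w / 2) \<in> S_alpha \<alpha>"
      unfolding S_alpha_def using seg_end by blast
    then obtain z where "((1::real), \<alpha> w, w + \<alpha> w / 2) \<in> closed_segment (-1, - \<sigma> z, z) (1, \<sigma> z, z)"
      unfolding SE by auto
    from seg_mem[OF this] show ?thesis by (metis fst_conv snd_conv mult_1_left)
  qed
  show "\<forall>w1 w2. w1 < w2 \<longrightarrow> (\<alpha> w2 - \<alpha> w1) / (w2 - w1) \<ge> -1"
  proof (intro allI impI)
    fix w1 w2 :: real assume lt: "w1 < w2"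
    define z1 where "z1 = w1 + \<alpha> w1 / 2"
    define z2 where "z2 = w2 + \<alpha> w2 / 2"
    have k1: "\<alpha> w1 = \<sigma> z1" using key z1_def by simp
    have k2: "\<alpha> w2 = \<sigma> z2" using key z2_def by simp
    have zd: "z2 - z1 = (w2 - w1) + (\<alpha> w2 - \<alpha> w1) / 2"
      unfolding z1_def z2_def by (simp add: field_simps)
    have "\<alpha> w2 - \<alpha> w1 \<ge> -(w2 - w1)"
    proof (rule ccontr)
      assume neg: "\<not> ?thesis"
      consider "z1 = z2" | "z1 < z2" | "z2 < z1" by linarith
      then show False
      proof cases
        case 1 then show False using neg k1 k2 lt by simp
      next
        case 2
        have "-2 \<le> (\<sigma> z2 - \<sigma> z1) / (z2 - z1)" using sl[OF 2] by blast
        then have "-2 * (z2 - z1) \<le> \<sigma> z2 - \<sigma> z1" using 2 by (simp add: divide_simps)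
        then have "-2 * (z2 - z1) \<le> \<alpha> w2 - \<alpha> w1" using k1 k2 by simp
        then show False using neg zd by (simp add: field_simps)
      next
        case 3
        have "(\<sigma> z1 - \<sigma> z2) / (z1 - z2) < 2" using sl[OF 3] by blast
        then have "\<sigma> z1 - \<sigma> z2 < 2 * (z1 - z2)" using 3 by (simp add: divide_simps)
        then have "\<alpha> w1 - \<alpha> w2 < 2 * (z1 - z2)" using k1 k2 by simp
        then show False using neg lt zd by (simp add: field_simps)
      qed
    qed
    then show "(\<alpha> w2 - \<alpha> w1) / (w2 - w1) \<ge> -1" using lt by (simp add: divide_simps)
  qed
qed

end
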